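(* Let $f:\mathbb{R}^n\to\mathbb{R}$ be $C^2$ smooth and convex, let $h:\mathbb{R}^n\to(-\infty,\infty]$ be proper, closed and convex, let $t>0$ and fix $z\in\mathbb{R}^n$. Define $F_{\mathrm{ALM}}(x;z):=\nabla f(x)+\frac{1}{t}\big(x-tz-\mathrm{prox}_{th}(x-tz)\big)$. Then for any $x\in\mathbb{R}^n$, the mapping $F_{\mathrm{ALM}}(\cdot;z)$ is BD-regular at $x$ if and only if, for every $M\in\partial_B\,\mathrm{prox}_{th}(x-tz)$, $\nabla^2 f(x)$ is positive definite on $\mathrm{Ker}(I-M)$, i.e. $d^\top\nabla^2 f(x)d>0$ for all nonzero $d$ with $(I-M)d=0$.
   Context: $\mathrm{prox}_{th}(y)=\arg\min_{x}\{h(x)+\frac{1}{2t}\|x-y\|^2\}$. For a locally Lipschitz mapping $G$ with differentiability set $D_G$, the B-Jacobian is $\partial_B G(x)=\{\lim_k J(x^k): x^k\in D_G, x^k\to x\}$; $G$ is BD-regular at $x$ if all elements of $\partial_B G(x)$ are nonsingular. *)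

theory Defs
  imports "HOL-Analysis.Analysis"
begin

definition proper_fun :: "('a::real_normed_vector \<Rightarrow> ereal) \<Rightarrow> bool" where
  "proper_fun h \<longleftrightarrow> (\<forall>x. h x \<noteq> -\<infinity>) \<and> (\<exists>x. h x < \<infinity>)"

definition epigraph_e :: "('a::real_normed_vector \<Rightarrow> ereal) \<Rightarrow> ('a \<times> real) set" where
  "epigraph_e h = {(x, r). h x \<le> ereal r}"

definition closed_fun :: "('a::real_normed_vector \<Rightarrow> ereal) \<Rightarrow> bool" where
  "closed_fun h \<longleftrightarrow> closed (epigraph_e h)"

definition convex_fun :: "('a::real_normed_vector \<Rightarrow> ereal) \<Rightarrow> bool" where
  "convex_fun h \<longleftrightarrow> convex (epigraph_e h)"

definition prox :: "real \<Rightarrow> ('a::real_normed_vector \<Rightarrow> ereal) \<Rightarrow> 'a \<Rightarrow> 'a" where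
  "prox t h y = (THE x. \<forall>w. h x + ereal (1 / (2 * t) * (norm (x - y))\<^sup>2)
                              \<le> h w + ereal (1 / (2 * t) * (norm (w - y))\<^sup>2))"

definition jac :: "(real^'n \<Rightarrow> real^'m) \<Rightarrow> real^'n \<Rightarrow> real^'n^'m" where
  "jac G x = matrix (frechet_derivative G (at x))"

definition grad :: "(real^'n \<Rightarrow> real) \<Rightarrow> real^'n \<Rightarrow> real^'n" where
  "grad f x = (\<chi> i. frechet_derivative f (at x) (axis i 1))"

definition hess :: "(real^'n \<Rightarrow> real) \<Rightarrow> real^'n \<Rightarrow> real^'n^'n" where
  "hess f x = jac (grad f) x"

definition C2 :: "(real^'n \<Rightarrow> real) \<Rightarrow> bool" where
  "C2 f \<longleftrightarrow> (\<forall>x. f differentiable (at x)) \<and> (\<forall>x. grad f differentiable (at x))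
            \<and> continuous_on UNIV (hess f)"

definition B_jac :: "(real^'n \<Rightarrow> real^'m) \<Rightarrow> real^'n \<Rightarrow> (real^'n^'m) set" where
  "B_jac G x = {M. \<exists>xs :: nat \<Rightarrow> real^'n.
      (\<forall>k. G differentiable (at (xs k))) \<and> xs \<longlonglongrightarrow> x \<and> (\<lambda>k. jac G (xs k)) \<longlonglongrightarrow> M}"

definition BD_regular :: "(real^'n \<Rightarrow> real^'n) \<Rightarrow> real^'n \<Rightarrow> bool" where
  "BD_regular G x \<longleftrightarrow> (\<forall>M \<in> B_jac G x. invertible M)"

definition F_ALM :: "(real^'n \<Rightarrow> real) \<Rightarrow> (real^'n \<Rightarrow> ereal) \<Rightarrow> real \<Rightarrow> real^'n \<Rightarrow> real^'n \<Rightarrow> real^'n" where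
  "F_ALM f h t z x = grad f x + (1 / t) *\<^sub>R (x - t *\<^sub>R z - prox t h (x - t *\<^sub>R z))"

end

theory Submission
  imports Defs
begin


lemma grad_inner:
  assumes "linear D"
  shows "D v = (\<chi> i. D (axis i 1)) \<bullet> (v::real^'n)"
proof -
  have "D v = D (\<Sum>i\<in>UNIV. (v$i) *\<^sub>R axis i 1)"
    using basis_expansion[of v] by (simp add: scalar_mult_eq_scaleR)
  also have "\<dots> = (\<Sum>i\<in>UNIV. v$i * D (axis i 1))"
    using assms by (simp add: linear_sum linear_scale)
  also have "\<dots> = (\<chi> i. D (axis i 1)) \<bullet> v"
    by (simp add: inner_vec_def mult.commute)
  finally show ?thesis .
qed

lemma L_grad:
  assumes "C2 f"
  shows "(f has_derivative (\<lambda>v. grad f y \<bullet> v)) (at y)"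
proof -
  have "f differentiable (at y)" using assms by (simp add: C2_def)
  hence d: "(f has_derivative frechet_derivative f (at y)) (at y)"
    by (simp add: frechet_derivative_works)
  have "linear (frechet_derivative f (at y))"
    using d has_derivative_linear by blast
  hence "frechet_derivative f (at y) = (\<lambda>v. grad f y \<bullet> v)"
    by (auto simp: grad_def intro!: ext grad_inner)
  with d show ?thesis by simp
qed

lemma L_hess:
  assumes "C2 f"
  shows "(grad f has_derivative (\<lambda>v. hess f y *v v)) (at y)"
proof -
  have "grad f differentiable (at y)" using assms by (simp add: C2_def)
  hence d: "(grad f has_derivative frechet_derivative (grad f) (at y)) (at y)"
    by (simp add: frechet_derivative_works)
  have "linear (frechet_derivative (grad f) (at y))"
    using d has_derivative_linear by blast
  hence "(\<lambda>v. hess f y *v v) = frechet_derivative (grad f) (at y)"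
    by (auto simp: hess_def jac_def matrix_works)
  with d show ?thesis by simp
qed

lemma L_hess_cont:
  assumes "C2 f"
  shows "isCont (hess f) y"
  using assms by (simp add: C2_def continuous_on_eq_continuous_at)

lemma line_deriv:
  fixes \<phi> :: "real^'n \<Rightarrow> real"
  assumes "(\<phi> has_derivative D) (at (a + r *\<^sub>R u))"
  shows "((\<lambda>r. \<phi> (a + r *\<^sub>R u)) has_real_derivative D u) (at r)"
proof -
  have l: "linear D" using assms has_derivative_linear by blast
  have "((\<lambda>r. a + r *\<^sub>R u) has_derivative (\<lambda>r. r *\<^sub>R u)) (at r)"
    by (auto intro!: derivative_eq_intros)
  from has_derivative_compose[OF this assms]
  have "((\<lambda>r. \<phi> (a + r *\<^sub>R u)) has_derivative (\<lambda>r. D (r *\<^sub>R u))) (at r)" by (simp add: o_def)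
  moreover have "(\<lambda>r. D (r *\<^sub>R u)) = (*) (D u)"
    using l by (auto simp: linear_scale)
  ultimately show ?thesis by (simp add: has_field_derivative_def)
qed


lemma grad_line:
  assumes "C2 f"
  shows "((\<lambda>r. f (a + r *\<^sub>R u)) has_real_derivative grad f (a + r *\<^sub>R u) \<bullet> u) (at r)"
  using line_deriv[OF L_grad[OF assms]] .

lemma hess_line:
  assumes "C2 f"
  shows "((\<lambda>r. grad f (a + r *\<^sub>R u) \<bullet> w) has_real_derivative (hess f (a + r *\<^sub>R u) *v u) \<bullet> w) (at r)"
  using line_deriv[OF has_derivative_inner_left[OF L_hess[OF assms]]] .

lemma L_psd:
  assumes C: "C2 f" and cv: "convex_on UNIV f"
  shows "0 \<le> d \<bullet> (hess f x *v d)"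
proof -
  define g where "g s = f (x + s *\<^sub>R d)" for s
  define k where "k s = grad f (x + s *\<^sub>R d) \<bullet> d" for s
  have gd: "(g has_real_derivative k s) (at s)" for s
    unfolding g_def k_def by (rule grad_line[OF C])
  have cg: "convex_on UNIV g"
  proof (rule convex_onI)
    fix t a b :: real assume "0 < t" "t < 1"
    have e: "x + ((1 - t) * a + t * b) *\<^sub>R d = (1 - t) *\<^sub>R (x + a *\<^sub>R d) + t *\<^sub>R (x + b *\<^sub>R d)"
      by (simp add: algebra_simps)
    show "g ((1 - t) *\<^sub>R a + t *\<^sub>R b) \<le> (1 - t) * g a + t * g b"
      unfolding g_def using \<open>0 < t\<close> \<open>t < 1\<close> e
      by (simp add: convex_onD[OF cv])
  qed simp
  have tan: "g b - g a \<ge> k a * (b - a)" for a b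
    by (rule convex_on_imp_above_tangent[OF cg]) (auto simp: gd)
  have mono: "k 0 \<le> k s" if "s > 0" for s
  proof -
    have "k 0 * s \<le> k s * s" using tan[of 0 s] tan[of s 0] by (simp add: algebra_simps)
    thus ?thesis using that by (simp add: mult_le_cancel_right)
  qed
  have kd: "(k has_real_derivative (hess f x *v d) \<bullet> d) (at 0)"
    unfolding k_def using hess_line[OF C, of x d d 0] by simp
  show ?thesis
  proof (rule ccontr)
    assume "\<not> ?thesis"
    hence "(hess f x *v d) \<bullet> d < 0" by (simp add: inner_commute)
    from DERIV_neg_dec_right[OF kd this] obtain e where "e > 0" "\<forall>h>0. h < e \<longrightarrow> k 0 > k (0 + h)" by blast
    hence "k 0 > k (e/2)" by simp
    with mono[of "e/2"] \<open>e > 0\<close> show False by simp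
  qed
qed


lemma Delta_mvt:
  assumes C: "C2 f" and s: "s > 0"
  shows "\<exists>\<xi> \<eta>. 0 < \<xi> \<and> \<xi> < s \<and> 0 < \<eta> \<and> \<eta> < s \<and>
     f ((x + s *\<^sub>R v) + s *\<^sub>R u) - f (x + s *\<^sub>R u) - f (x + s *\<^sub>R v) + f x
       = s * (s * ((hess f ((x + \<xi> *\<^sub>R u) + \<eta> *\<^sub>R v) *v v) \<bullet> u))"
proof -
  define g where "g r = f ((x + s *\<^sub>R v) + r *\<^sub>R u) - f (x + r *\<^sub>R u)" for r
  define g' where "g' r = grad f ((x + s *\<^sub>R v) + r *\<^sub>R u) \<bullet> u - grad f (x + r *\<^sub>R u) \<bullet> u" for r
  have "DERIV g r :> g' r" for r
    unfolding g_def g'_def by (intro DERIV_diff grad_line C)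
  from MVT2[OF s, of g g'] this obtain \<xi> where xi: "0 < \<xi>" "\<xi> < s" "g s - g 0 = (s - 0) * g' \<xi>"
    by blast
  define k where "k b = grad f ((x + \<xi> *\<^sub>R u) + b *\<^sub>R v) \<bullet> u" for b
  have "DERIV k b :> (hess f ((x + \<xi> *\<^sub>R u) + b *\<^sub>R v) *v v) \<bullet> u" for b
    unfolding k_def by (rule hess_line[OF C])
  from MVT2[OF s, of k "\<lambda>b. (hess f ((x + \<xi> *\<^sub>R u) + b *\<^sub>R v) *v v) \<bullet> u"] this obtain \<eta> where eta: "0 < \<eta>" "\<eta> < s"
    "k s - k 0 = (s - 0) * ((hess f ((x + \<xi> *\<^sub>R u) + \<eta> *\<^sub>R v) *v v) \<bullet> u)"
    by blast
  have "g' \<xi> = k s - k 0"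
    unfolding g'_def k_def by (simp add: add_ac)
  hence "g s - g 0 = s * (s * ((hess f ((x + \<xi> *\<^sub>R u) + \<eta> *\<^sub>R v) *v v) \<bullet> u))"
    using xi eta by simp
  moreover have "g s - g 0 = f ((x + s *\<^sub>R v) + s *\<^sub>R u) - f (x + s *\<^sub>R u) - f (x + s *\<^sub>R v) + f x"
    unfolding g_def by simp
  ultimately show ?thesis using xi eta by metis
qed

lemma bl_mv: "bounded_linear (\<lambda>A::real^'n^'m. A *v v)"
  unfolding linear_conv_bounded_linear[symmetric]
  by (rule linearI) (simp_all add: matrix_vector_mult_add_rdistrib scaleR_matrix_vector_assoc)

lemma abs_aux: "\<bar>(y::real) - A\<bar> < \<bar>A - B\<bar> / 2 \<Longrightarrow> \<bar>y - B\<bar> < \<bar>A - B\<bar> / 2 \<Longrightarrow> False"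
  by (auto simp: abs_if split: if_split_asm)

lemma L_sym:
  assumes C: "C2 f"
  shows "u \<bullet> (hess f x *v v) = v \<bullet> (hess f x *v u)"
proof (rule ccontr)
  define \<phi>1 where "\<phi>1 p = (hess f p *v v) \<bullet> u" for p
  define \<phi>2 where "\<phi>2 p = (hess f p *v u) \<bullet> v" for p
  have c1: "isCont \<phi>1 x" unfolding \<phi>1_def
    by (intro continuous_intros isCont_o2[OF L_hess_cont[OF C]] bounded_linear.continuous[OF bl_mv]) 
  have c2: "isCont \<phi>2 x" unfolding \<phi>2_def
    by (intro continuous_intros isCont_o2[OF L_hess_cont[OF C]] bounded_linear.continuous[OF bl_mv])
  assume ne: "u \<bullet> (hess f x *v v) \<noteq> v \<bullet> (hess f x *v u)"
  define e where "e = \<bar>\<phi>1 x - \<phi>2 x\<bar> / 2"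
  have e: "e > 0" using ne unfolding e_def \<phi>1_def \<phi>2_def by (simp add: inner_commute)
  obtain d1 where d1: "d1 > 0" "\<And>p. dist p x < d1 \<Longrightarrow> dist (\<phi>1 p) (\<phi>1 x) < e"
    using c1 e unfolding continuous_at_eps_delta by blast
  obtain d2 where d2: "d2 > 0" "\<And>p. dist p x < d2 \<Longrightarrow> dist (\<phi>2 p) (\<phi>2 x) < e"
    using c2 e unfolding continuous_at_eps_delta by blast
  define s where "s = min d1 d2 / (norm u + norm v + 1)"
  have uv: "norm u + norm v + 1 > 0" by (smt (verit) norm_ge_zero)
  have s: "s > 0" using d1 d2 uv by (simp add: s_def)
  have close: "dist ((x + a *\<^sub>R b) + c *\<^sub>R w) x < min d1 d2"
    if "0 < a" "a < s" "0 < c" "c < s" "b = u \<and> w = v \<or> b = v \<and> w = u" for a b c w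
  proof -
    have "dist ((x + a *\<^sub>R b) + c *\<^sub>R w) x = norm (a *\<^sub>R b + c *\<^sub>R w)"
      by (simp add: dist_norm)
    also have "\<dots> \<le> a * norm b + c * norm w"
      using that by (smt (verit) norm_scaleR norm_triangle_ineq)
    also have "\<dots> \<le> s * norm b + s * norm w"
      using that by (intro add_mono mult_right_mono) auto
    also have "\<dots> = s * (norm u + norm v)" using that by (auto simp: algebra_simps)
    also have "\<dots> < s * (norm u + norm v + 1)" using s by simp
    also have "\<dots> = min d1 d2" unfolding s_def using uv by simp
    finally show ?thesis .
  qed
  obtain a b where ab: "0 < a" "a < s" "0 < b" "b < s"
    "f ((x + s *\<^sub>R v) + s *\<^sub>R u) - f (x + s *\<^sub>R u) - f (x + s *\<^sub>R v) + f x
       = s * (s * \<phi>1 ((x + a *\<^sub>R u) + b *\<^sub>R v))"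
    using Delta_mvt[OF C s, of x v u] unfolding \<phi>1_def by blast
  obtain a' b' where ab': "0 < a'" "a' < s" "0 < b'" "b' < s"
    "f ((x + s *\<^sub>R u) + s *\<^sub>R v) - f (x + s *\<^sub>R v) - f (x + s *\<^sub>R u) + f x
       = s * (s * \<phi>2 ((x + a' *\<^sub>R v) + b' *\<^sub>R u))"
    using Delta_mvt[OF C s, of x u v] unfolding \<phi>2_def by blast
  have "(x + s *\<^sub>R u) + s *\<^sub>R v = (x + s *\<^sub>R v) + s *\<^sub>R u" by (simp add: add_ac)
  hence "f ((x + s *\<^sub>R v) + s *\<^sub>R u) - f (x + s *\<^sub>R v) - f (x + s *\<^sub>R u) + f x
       = s * (s * \<phi>2 ((x + a' *\<^sub>R v) + b' *\<^sub>R u))" using ab'(5) by metis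
  hence "s * (s * \<phi>1 ((x + a *\<^sub>R u) + b *\<^sub>R v)) = s * (s * \<phi>2 ((x + a' *\<^sub>R v) + b' *\<^sub>R u))"
    using ab(5) by linarith
  hence eq: "\<phi>1 ((x + a *\<^sub>R u) + b *\<^sub>R v) = \<phi>2 ((x + a' *\<^sub>R v) + b' *\<^sub>R u)"
    using s by simp
  have "dist (\<phi>1 ((x + a *\<^sub>R u) + b *\<^sub>R v)) (\<phi>1 x) < e"
    using close[of a b u v] ab by (intro d1(2)) auto
  moreover have "dist (\<phi>2 ((x + a' *\<^sub>R v) + b' *\<^sub>R u)) (\<phi>2 x) < e"
    using close[of a' b' v u] ab' by (intro d2(2)) auto
  ultimately show False using eq abs_aux unfolding e_def dist_real_def by metis
qed

lemma L_ker:
  assumes C: "C2 f" and cv: "convex_on UNIV f"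
    and d0: "d \<bullet> (hess f x *v d) = 0"
  shows "hess f x *v d = 0"
proof -
  let ?H = "hess f x"
  define e where "e = ?H *v d"
  define a where "a = e \<bullet> e"
  define c where "c = e \<bullet> (?H *v e)"
  have c0: "c \<ge> 0" unfolding c_def by (rule L_psd[OF C cv])
  have q: "0 \<le> 2 * r * a + r * r * c" for r
  proof -
    have sc: "?H *v (r *\<^sub>R e) = r *\<^sub>R (?H *v e)"
      by (simp add: matrix_scaleR_vector_ac scaleR_matrix_vector_assoc)
    have "0 \<le> (d + r *\<^sub>R e) \<bullet> (?H *v (d + r *\<^sub>R e))" by (rule L_psd[OF C cv])
    also have "\<dots> = d \<bullet> (?H *v d) + r * (d \<bullet> (?H *v e)) + r * (e \<bullet> (?H *v d)) + r * r * c"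
      by (simp add: c_def sc matrix_vector_right_distrib inner_add_left inner_add_right algebra_simps)
    also have "\<dots> = 2 * r * a + r * r * c"
      using d0 L_sym[OF C, of d x e] by (simp add: a_def e_def algebra_simps)
    finally show ?thesis .
  qed
  have "a = 0"
  proof (rule ccontr)
    assume "a \<noteq> 0"
    hence ap: "a > 0" unfolding a_def by simp
    define r where "r = - a / (c + 1)"
    have c1: "c + 1 > 0" using c0 by simp
    have rn: "r < 0" unfolding r_def using ap c1 by (simp add: divide_neg_pos)
    have "r * c \<ge> - a" unfolding r_def using ap c0 c1
      by (simp add: field_simps)
    hence "r * (r * c) \<le> r * (- a)" using rn mult_left_mono_neg[of "-a" "r*c" r] by simp
    hence "2 * r * a + r * r * c \<le> r * a" by (simp add: algebra_simps)
    also have "\<dots> < 0" using rn ap by (simp add: mult_neg_pos)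
    finally show False using q[of r] by simp
  qed
  thus ?thesis unfolding a_def e_def by simp
qed



lemma affine_minorant:
  fixes h :: "real^'n \<Rightarrow> ereal"
  assumes pr: "proper_fun h" and cl: "closed_fun h" and cv: "convex_fun h"
  shows "\<exists>a b. \<forall>w. ereal (a \<bullet> w + b) \<le> h w"
proof -
  obtain x0 where x0: "h x0 < \<infinity>" using pr unfolding proper_fun_def by auto
  have "h x0 \<noteq> -\<infinity>" using pr unfolding proper_fun_def by auto
  with x0 obtain r0 where r0: "h x0 = ereal r0" by (cases "h x0") auto
  let ?S = "epigraph_e h"
  have nin: "(x0, r0 - 1) \<notin> ?S" using r0 by (simp add: epigraph_e_def)
  obtain c \<beta> where c: "c \<bullet> (x0, r0 - 1) < \<beta>" "\<forall>p\<in>?S. \<beta> < c \<bullet> p"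
    using separating_hyperplane_closed_point[OF _ _ nin] cl cv
    unfolding closed_fun_def convex_fun_def by blast
  obtain c1 c2 where c12: "c = (c1, c2)" by (cases c)
  have "(x0, r0) \<in> ?S" using r0 by (simp add: epigraph_e_def)
  with c c12 have c2: "c2 > 0" by (force simp: inner_Pair algebra_simps)
  have "ereal ((- (1/c2) *\<^sub>R c1) \<bullet> w + \<beta> / c2) \<le> h w" for w
  proof (cases "h w")
    case (real r)
    hence "(w, r) \<in> ?S" by (simp add: epigraph_e_def)
    with c c12 have "\<beta> < c1 \<bullet> w + c2 * r" by (force simp: inner_Pair)
    hence "(\<beta> - c1 \<bullet> w) / c2 \<le> r" using c2 by (simp add: field_simps)
    thus ?thesis using real c2 by (simp add: field_simps)
  next
    case MInf thus ?thesis using pr unfolding proper_fun_def by auto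
  qed simp
  thus ?thesis by blast
qed

lemma quad_bound:
  fixes \<rho> A K :: real
  assumes "\<rho> \<ge> 0" "A \<ge> 0" "K \<ge> 0" "\<rho>^2 \<le> K + A * \<rho>"
  shows "\<rho> \<le> 1 + K + A"
proof (cases "\<rho> \<le> 1")
  case False
  have "K \<le> K * \<rho>" using mult_left_mono[of 1 \<rho> K] False assms by simp
  hence "\<rho> * \<rho> \<le> (K + A) * \<rho>" using assms
    by (simp add: power2_eq_square distrib_right)
  hence "\<rho> \<le> K + A" using False by (simp add: mult_le_cancel_right)
  thus ?thesis by simp
qed (use assms in auto)

lemma prox_exists:
  fixes h :: "real^'n \<Rightarrow> ereal"
  assumes pr: "proper_fun h" and cl: "closed_fun h" and cv: "convex_fun h" and t: "t > 0"
  shows "\<exists>p. \<forall>w. h p + ereal (1 / (2 * t) * (norm (p - y))\<^sup>2) \<le> h w + ereal (1 / (2 * t) * (norm (w - y))\<^sup>2)"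
proof -
  define qq where "qq w = 1 / (2 * t) * (norm (w - y))\<^sup>2" for w
  obtain a b where ab: "\<And>w. ereal (a \<bullet> w + b) \<le> h w" using affine_minorant[OF pr cl cv] by blast
  obtain x0 where x0: "h x0 < \<infinity>" using pr unfolding proper_fun_def by auto
  have "h x0 \<noteq> -\<infinity>" using pr unfolding proper_fun_def by auto
  with x0 obtain r0 where r0: "h x0 = ereal r0" by (cases "h x0") auto
  define C where "C = r0 + qq x0"
  define g where "g p = snd p + qq (fst p)" for p :: "(real^'n) \<times> real"
  define K where "K = epigraph_e h \<inter> {p. g p \<le> C}"
  have contg: "continuous_on UNIV g" unfolding g_def qq_def
    by (intro continuous_intros)
  have "closed K" unfolding K_def using cl unfolding closed_fun_def
    by (intro closed_Int closed_Collect_le continuous_intros contg[THEN continuous_on_subset]) auto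
  define K0 where "K0 = \<bar>C - b - a \<bullet> y\<bar>"
  define R where "R = 1 + 2 * t * K0 + 2 * t * norm a"
  define R2 where "R2 = \<bar>C\<bar> + norm a * (norm y + R) + \<bar>b\<bar>"
  have inK: "fst p \<in> cball y R \<and> snd p \<in> cball 0 R2" if "p \<in> K" for p
  proof -
    obtain w r where p: "p = (w, r)" by (cases p)
    have hw: "h w \<le> ereal r" and le: "r + qq w \<le> C" using that p by (auto simp: K_def epigraph_e_def g_def)
    have lo: "a \<bullet> w + b \<le> r" using order_trans[OF ab hw] by simp
    define \<rho> where "\<rho> = norm (w - y)"
    have "a \<bullet> w = a \<bullet> y + a \<bullet> (w - y)" by (simp add: inner_diff_right)
    moreover have "a \<bullet> (w - y) \<ge> - (norm a * \<rho>)" unfolding \<rho>_def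
      using Cauchy_Schwarz_ineq2[of a "w - y"] by (smt (verit) abs_le_iff)
    ultimately have "qq w \<le> K0 + norm a * \<rho>" using lo le unfolding K0_def by linarith
    hence "\<rho>^2 \<le> 2 * t * K0 + 2 * t * norm a * \<rho>" unfolding qq_def \<rho>_def using t
      by (simp add: field_simps)
    hence r: "\<rho> \<le> R" unfolding R_def
      using quad_bound[of \<rho> "2 * t * norm a" "2 * t * K0"] t by (simp add: \<rho>_def K0_def)
    hence "norm w \<le> norm y + R" unfolding \<rho>_def by (smt (verit) norm_triangle_ineq2 norm_minus_commute)
    hence "a \<bullet> w \<ge> - (norm a * (norm y + R))"
      using Cauchy_Schwarz_ineq2[of a w] by (smt (verit) abs_le_iff mult_left_mono norm_ge_zero)
    moreover have "qq w \<ge> 0" unfolding qq_def using t by simp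
    moreover have "R \<ge> 0" unfolding R_def K0_def using t by simp
    hence "norm a * (norm y + R) \<ge> 0" by simp
    ultimately have "r \<le> R2 \<and> - r \<le> R2" using lo le abs_ge_self[of C] abs_ge_minus_self[of b]
      unfolding R2_def by linarith
    hence "\<bar>r\<bar> \<le> R2" by (simp add: abs_le_iff)
    thus ?thesis using r p by (simp add: dist_norm \<rho>_def norm_minus_commute)
  qed
  have "bounded K"
  proof (rule bounded_subset[OF bounded_Times[OF bounded_cball[of y R] bounded_cball[of 0 R2]]])
    show "K \<subseteq> cball y R \<times> cball 0 R2" using inK by (auto simp: mem_Times_iff)
  qed
  with \<open>closed K\<close> have "compact K" by (simp add: compact_eq_bounded_closed)
  moreover have "(x0, r0) \<in> K" using r0 by (simp add: K_def epigraph_e_def g_def C_def)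
  ultimately obtain ps where ps: "ps \<in> K" "\<And>p. p \<in> K \<Longrightarrow> g ps \<le> g p"
    using continuous_attains_inf[of K g] contg[THEN continuous_on_subset] by blast
  obtain ws rs where wrs: "ps = (ws, rs)" by (cases ps)
  have hws: "h ws \<le> ereal rs" and gC: "g ps \<le> C" using ps(1) wrs by (auto simp: K_def epigraph_e_def)
  have "h ws + ereal (qq ws) \<le> h w + ereal (qq w)" for w
  proof -
    have "h ws + ereal (qq ws) \<le> ereal rs + ereal (qq ws)" using hws by (rule add_right_mono)
    also have "\<dots> = ereal (g ps)" using wrs by (simp add: g_def)
    finally have 1: "h ws + ereal (qq ws) \<le> ereal (g ps)" .
    show ?thesis
    proof (cases "h w")
      case (real r)
      show ?thesis
      proof (cases "g (w, r) \<le> C")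
        case True
        hence "(w, r) \<in> K" using real by (simp add: K_def epigraph_e_def)
        hence "g ps \<le> g (w, r)" by (rule ps(2))
        hence "ereal (g ps) \<le> ereal (g (w, r))" by simp
        moreover have "ereal (g (w, r)) = h w + ereal (qq w)" using real by (simp add: g_def)
        ultimately show ?thesis using 1 by (metis order_trans)
      next
        case False
        hence "ereal (g ps) \<le> ereal (g (w, r))" using gC by simp
        moreover have "ereal (g (w, r)) = h w + ereal (qq w)" using real by (simp add: g_def)
        ultimately show ?thesis using 1 by (metis order_trans)
      qed
    next
      case PInf thus ?thesis by simp
    next
      case MInf thus ?thesis using pr unfolding proper_fun_def by auto
    qed
  qed
  thus ?thesis unfolding qq_def by blast
qed


lemma parallelogram_mid:
  fixes p1 p2 y :: "'a::real_inner"
  shows "(norm ((1/2) *\<^sub>R p1 + (1/2) *\<^sub>R p2 - y))\<^sup>2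
     = ((norm (p1 - y))\<^sup>2 + (norm (p2 - y))\<^sup>2) / 2 - (norm (p1 - p2))\<^sup>2 / 4"
proof -
  have e: "(1/2) *\<^sub>R p1 + (1/2) *\<^sub>R p2 - y = (1/2) *\<^sub>R ((p1 - y) + (p2 - y))"
  proof -
    have hh: "(1/2) *\<^sub>R y + (1/2) *\<^sub>R y = y" by (simp flip: scaleR_add_left)
    show ?thesis by (simp add: algebra_simps hh)
  qed
  have e2: "p1 - p2 = (p1 - y) - (p2 - y)" by simp
  show ?thesis unfolding e e2
    by (simp add: power2_norm_eq_inner inner_add_left inner_add_right inner_diff_left inner_diff_right
        inner_commute field_simps)
qed

lemma prox_unique:
  fixes h :: "real^'n \<Rightarrow> ereal"
  assumes pr: "proper_fun h" and cv: "convex_fun h" and t: "t > 0"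
    and m1: "\<forall>w. h p1 + ereal (1 / (2 * t) * (norm (p1 - y))\<^sup>2) \<le> h w + ereal (1 / (2 * t) * (norm (w - y))\<^sup>2)"
    and m2: "\<forall>w. h p2 + ereal (1 / (2 * t) * (norm (p2 - y))\<^sup>2) \<le> h w + ereal (1 / (2 * t) * (norm (w - y))\<^sup>2)"
  shows "p1 = p2"
proof -
  define qq where "qq w = 1 / (2 * t) * (norm (w - y))\<^sup>2" for w
  obtain x0 where x0: "h x0 < \<infinity>" using pr unfolding proper_fun_def by auto
  have fin: "\<exists>r. h p = ereal r" if m: "\<forall>w. h p + ereal (qq p) \<le> h w + ereal (qq w)" for p
  proof -
    have "h p + ereal (qq p) \<le> h x0 + ereal (qq x0)" using m by blast
    also have "\<dots> < \<infinity>" using x0 by simp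
    finally have "h p \<noteq> \<infinity>" by auto
    moreover have "h p \<noteq> -\<infinity>" using pr unfolding proper_fun_def by auto
    ultimately show ?thesis by (cases "h p") auto
  qed
  obtain r1 where r1: "h p1 = ereal r1" using fin m1 unfolding qq_def by blast
  obtain r2 where r2: "h p2 = ereal r2" using fin m2 unfolding qq_def by blast
  define m where "m = (1/2) *\<^sub>R p1 + (1/2) *\<^sub>R p2"
  have "(p1, r1) \<in> epigraph_e h" "(p2, r2) \<in> epigraph_e h" using r1 r2 by (auto simp: epigraph_e_def)
  hence "(1/2) *\<^sub>R (p1, r1) + (1/2) *\<^sub>R (p2, r2) \<in> epigraph_e h"
    using cv unfolding convex_fun_def by (intro convexD) auto
  hence hm: "h m \<le> ereal (r1/2 + r2/2)" by (simp add: epigraph_e_def m_def)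
  have "ereal (r1 + qq p1) \<le> h m + ereal (qq m)" using m1 r1 unfolding qq_def by simp
  also have "\<dots> \<le> ereal (r1/2 + r2/2) + ereal (qq m)" using hm by (rule add_right_mono)
  finally have A: "r1 + qq p1 \<le> r1/2 + r2/2 + qq m" by simp
  have "ereal (r1 + qq p1) \<le> ereal (r2 + qq p2)" using m1[rule_format, of p2] r1 r2 unfolding qq_def by simp
  moreover have "ereal (r2 + qq p2) \<le> ereal (r1 + qq p1)" using m2[rule_format, of p1] r1 r2 unfolding qq_def by simp
  ultimately have B: "r1 + qq p1 = r2 + qq p2" by simp
  have "qq m = (qq p1 + qq p2) / 2 - 1 / (2 * t) * (norm (p1 - p2))\<^sup>2 / 4"
    unfolding qq_def m_def parallelogram_mid using t by (simp add: field_simps)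
  moreover have "\<And>X. r1 + qq p1 \<le> r1/2 + r2/2 + qq m \<Longrightarrow> r1 + qq p1 = r2 + qq p2 \<Longrightarrow>
      qq m = (qq p1 + qq p2) / 2 - X \<Longrightarrow> X \<le> 0" by argo
  ultimately have "1 / (2 * t) * (norm (p1 - p2))\<^sup>2 / 4 \<le> 0" using A B by blast
  hence "(norm (p1 - p2))\<^sup>2 \<le> 0" using t by (simp add: field_simps)
  thus ?thesis by simp
qed

lemma prox_min:
  fixes h :: "real^'n \<Rightarrow> ereal"
  assumes pr: "proper_fun h" and cl: "closed_fun h" and cv: "convex_fun h" and t: "t > 0"
  shows "\<forall>w. h (prox t h y) + ereal (1 / (2 * t) * (norm (prox t h y - y))\<^sup>2) \<le> h w + ereal (1 / (2 * t) * (norm (w - y))\<^sup>2)"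
proof -
  have "\<exists>!p. \<forall>w. h p + ereal (1 / (2 * t) * (norm (p - y))\<^sup>2) \<le> h w + ereal (1 / (2 * t) * (norm (w - y))\<^sup>2)"
    using prox_exists[OF pr cl cv t, of y] prox_unique[OF pr cv t] by blast
  thus ?thesis unfolding prox_def by (rule theI')
qed

lemma prox_fin:
  fixes h :: "real^'n \<Rightarrow> ereal"
  assumes pr: "proper_fun h" and cl: "closed_fun h" and cv: "convex_fun h" and t: "t > 0"
  shows "\<exists>r. h (prox t h y) = ereal r"
proof -
  obtain x0 where x0: "h x0 < \<infinity>" using pr unfolding proper_fun_def by auto
  have "h (prox t h y) + ereal (1 / (2 * t) * (norm (prox t h y - y))\<^sup>2) \<le> h x0 + ereal (1 / (2 * t) * (norm (x0 - y))\<^sup>2)"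
    using prox_min[OF assms] by blast
  also have "\<dots> < \<infinity>" using x0 by simp
  finally have "h (prox t h y) \<noteq> \<infinity>" by auto
  moreover have "h (prox t h y) \<noteq> -\<infinity>" using pr unfolding proper_fun_def by auto
  ultimately show ?thesis by (cases "h (prox t h y)") auto
qed


lemma eps_aux:
  fixes A c :: real
  assumes c: "c \<ge> 0" and H: "\<And>s. 0 < s \<Longrightarrow> s \<le> 1 \<Longrightarrow> 0 \<le> A + s * c"
  shows "0 \<le> A"
proof (rule ccontr)
  assume "\<not> 0 \<le> A"
  hence A: "A < 0" by simp
  define s where "s = min 1 (- A / (2 * (c + 1)))"
  have "- A / (2 * (c + 1)) > 0" using A c by (intro divide_pos_pos) auto
  hence s0: "0 < s" "s \<le> 1" by (auto simp: s_def)
  have "s \<le> - A / (2 * (c + 1))" by (simp add: s_def)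
  hence "s * c \<le> (- A / (2 * (c + 1))) * c" using c by (rule mult_right_mono)
  also have "\<dots> = (- A / 2) * (c / (c + 1))" using c by (simp add: field_simps)
  also have "\<dots> \<le> (- A / 2) * 1" using A c by (intro mult_left_mono) auto
  finally have "A + s * c < 0" using A by simp
  with H[OF s0] show False by simp
qed

lemma prox_vi:
  fixes h :: "real^'n \<Rightarrow> ereal"
  assumes pr: "proper_fun h" and cl: "closed_fun h" and cv: "convex_fun h" and t: "t > 0"
    and p: "p = prox t h y" and rp: "h p = ereal rp" and rw: "h w = ereal rw"
  shows "rp + ((y - p) \<bullet> (w - p)) / t \<le> rw"
proof -
  define qq where "qq w = 1 / (2 * t) * (norm (w - y))\<^sup>2" for w
  have mn: "\<And>w. h p + ereal (qq p) \<le> h w + ereal (qq w)"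
    using prox_min[OF pr cl cv t, of y] unfolding p qq_def by blast
  define D where "D = (p - y) \<bullet> (w - p)"
  define N where "N = (norm (w - p))\<^sup>2"
  have key: "0 \<le> (rw - rp + D / t) + s * (N / (2 * t))" if s: "0 < s" "s \<le> 1" for s
  proof -
    define ws where "ws = (1 - s) *\<^sub>R p + s *\<^sub>R w"
    have "(p, rp) \<in> epigraph_e h" "(w, rw) \<in> epigraph_e h" using rp rw by (auto simp: epigraph_e_def)
    hence "(1 - s) *\<^sub>R (p, rp) + s *\<^sub>R (w, rw) \<in> epigraph_e h"
      using cv s unfolding convex_fun_def by (intro convexD) auto
    hence hws: "h ws \<le> ereal ((1 - s) * rp + s * rw)" by (simp add: epigraph_e_def ws_def)
    have "ereal (rp + qq p) \<le> h ws + ereal (qq ws)" using mn[of ws] rp by simp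
    also have "\<dots> \<le> ereal ((1 - s) * rp + s * rw) + ereal (qq ws)" using hws by (rule add_right_mono)
    finally have 1: "rp + qq p \<le> (1 - s) * rp + s * rw + qq ws" by simp
    have e: "ws - y = (p - y) + s *\<^sub>R (w - p)" by (simp add: ws_def algebra_simps)
    have "(norm (ws - y))\<^sup>2 = (norm (p - y))\<^sup>2 + 2 * s * D + s * s * N"
      unfolding e by (simp add: power2_norm_eq_inner inner_add_left inner_add_right D_def N_def inner_commute algebra_simps)
    hence "qq ws = qq p + s * D / t + s * s * N / (2 * t)"
      unfolding qq_def using t by (simp add: field_simps)
    with 1 have "0 \<le> s * (rw - rp) + s * D / t + s * s * N / (2 * t)" by (simp add: algebra_simps)
    also have "\<dots> = s * ((rw - rp + D / t) + s * (N / (2 * t)))" by (simp add: algebra_simps)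
    finally show ?thesis using s by (simp add: zero_le_mult_iff)
  qed
  have "0 \<le> rw - rp + D / t"
    by (rule eps_aux[OF _ key]) (use t in \<open>auto simp: N_def\<close>)
  moreover have "D = - ((y - p) \<bullet> (w - p))" by (simp add: D_def inner_diff_left)
  ultimately show ?thesis by simp
qed

lemma prox_nonexp:
  fixes h :: "real^'n \<Rightarrow> ereal"
  assumes pr: "proper_fun h" and cl: "closed_fun h" and cv: "convex_fun h" and t: "t > 0"
  shows "norm (prox t h y1 - prox t h y2) \<le> norm (y1 - y2)"
proof -
  define p1 where "p1 = prox t h y1"
  define p2 where "p2 = prox t h y2"
  obtain r1 where r1: "h p1 = ereal r1" using prox_fin[OF pr cl cv t] unfolding p1_def by blast
  obtain r2 where r2: "h p2 = ereal r2" using prox_fin[OF pr cl cv t] unfolding p2_def by blast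
  have a: "r1 + ((y1 - p1) \<bullet> (p2 - p1)) / t \<le> r2" by (rule prox_vi[OF pr cl cv t p1_def r1 r2])
  have b: "r2 + ((y2 - p2) \<bullet> (p1 - p2)) / t \<le> r1" by (rule prox_vi[OF pr cl cv t p2_def r2 r1])
  have "((y1 - p1) \<bullet> (p2 - p1)) / t + ((y2 - p2) \<bullet> (p1 - p2)) / t \<le> 0" using a b by simp
  hence "(y1 - p1) \<bullet> (p2 - p1) + (y2 - p2) \<bullet> (p1 - p2) \<le> 0" using t
    by (simp add: add_divide_distrib[symmetric] divide_le_0_iff)
  moreover have "(y1 - p1) \<bullet> (p2 - p1) + (y2 - p2) \<bullet> (p1 - p2) = (p1 - p2) \<bullet> (p1 - p2) - (y1 - y2) \<bullet> (p1 - p2)"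
    by (simp add: inner_diff_left inner_diff_right inner_commute algebra_simps)
  ultimately have "(norm (p1 - p2))\<^sup>2 \<le> (y1 - y2) \<bullet> (p1 - p2)" by (simp add: power2_norm_eq_inner)
  also have "\<dots> \<le> norm (y1 - y2) * norm (p1 - p2)" by (rule Cauchy_Schwarz_ineq2[THEN abs_le_D1])
  finally have "norm (p1 - p2) * norm (p1 - p2) \<le> norm (y1 - y2) * norm (p1 - p2)" by (simp add: power2_eq_square)
  hence "norm (p1 - p2) \<le> norm (y1 - y2)"
    by (cases "norm (p1 - p2) = 0") (auto simp: mult_le_cancel_right)
  thus ?thesis by (simp add: p1_def p2_def)
qed


lemma deriv_bound:
  fixes G :: "'a::real_normed_vector \<Rightarrow> 'b::real_normed_vector"
  assumes der: "(G has_derivative D) (at y)" and nx: "\<And>a b. norm (G a - G b) \<le> norm (a - b)"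
  shows "norm (D d) \<le> norm d"
proof (cases "d = 0")
  case True
  have "linear D" using der has_derivative_linear by blast
  thus ?thesis using True by (simp add: linear_0)
next
  case False
  hence nd: "norm d > 0" by simp
  have bl: "bounded_linear D" using der by (simp add: has_derivative_at_alt)
  have "norm (D d) \<le> norm d + e" if e: "e > 0" for e
  proof -
    define e0 where "e0 = e / norm d"
    have e0: "e0 > 0" using e nd by (simp add: e0_def)
    obtain \<delta> where \<delta>: "\<delta> > 0" "\<And>x. norm (x - y) < \<delta> \<Longrightarrow> norm (G x - G y - D (x - y)) \<le> e0 * norm (x - y)"
      using der e0 unfolding has_derivative_at_alt by blast
    define s where "s = \<delta> / (2 * norm d)"
    have s: "s > 0" using \<delta> nd by (simp add: s_def)
    have ns: "norm ((y + s *\<^sub>R d) - y) = s * norm d" using s by simp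
    also have "\<dots> < \<delta>" using \<delta> nd by (simp add: s_def)
    finally have "norm (G (y + s *\<^sub>R d) - G y - D ((y + s *\<^sub>R d) - y)) \<le> e0 * (s * norm d)"
      using \<delta>(2) ns by metis
    hence 1: "norm (G (y + s *\<^sub>R d) - G y - s *\<^sub>R D d) \<le> s * e"
      using nd by (simp add: e0_def linear_scale[OF bounded_linear.linear[OF bl]] mult.commute)
    have 2: "norm (G (y + s *\<^sub>R d) - G y) \<le> s * norm d"
      using nx[of "y + s *\<^sub>R d" y] s by simp
    have "norm (s *\<^sub>R D d) \<le> norm (G (y + s *\<^sub>R d) - G y) + norm (G (y + s *\<^sub>R d) - G y - s *\<^sub>R D d)"
      using norm_triangle_sub[of "s *\<^sub>R D d" "G (y + s *\<^sub>R d) - G y"] by (simp add: norm_minus_commute)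
    hence "s * norm (D d) \<le> s * (norm d + e)" using 1 2 s by (simp add: algebra_simps)
    thus ?thesis using s by simp
  qed
  thus ?thesis by (rule field_le_epsilon)
qed



lemma inv_iff_ker:
  fixes A :: "real^'n^'n"
  shows "invertible A \<longleftrightarrow> (\<forall>x. A *v x = 0 \<longrightarrow> x = 0)"
  by (simp add: invertible_left_inverse matrix_left_invertible_ker)

lemma lin_key:
  fixes H M :: "real^'n^'n" and t :: real
  assumes t: "t > 0"
    and psd: "\<And>d. 0 \<le> d \<bullet> (H *v d)"
    and ker: "\<And>d. d \<bullet> (H *v d) = 0 \<Longrightarrow> H *v d = 0"
    and nx: "\<And>d. norm (M *v d) \<le> norm d"
  shows "invertible (H + (1/t) *\<^sub>R (mat 1 - M)) \<longleftrightarrow>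
     (\<forall>d. d \<noteq> 0 \<and> (mat 1 - M) *v d = 0 \<longrightarrow> d \<bullet> (H *v d) > 0)"
proof
  assume inv: "invertible (H + (1/t) *\<^sub>R (mat 1 - M))"
  show "\<forall>d. d \<noteq> 0 \<and> (mat 1 - M) *v d = 0 \<longrightarrow> d \<bullet> (H *v d) > 0"
  proof (intro allI impI)
    fix d :: "real^'n" assume d: "d \<noteq> 0 \<and> (mat 1 - M) *v d = 0"
    show "d \<bullet> (H *v d) > 0"
    proof (rule ccontr)
      assume "\<not> d \<bullet> (H *v d) > 0"
      with psd[of d] have "d \<bullet> (H *v d) = 0" by linarith
      hence "H *v d = 0" by (rule ker)
      hence "(H + (1/t) *\<^sub>R (mat 1 - M)) *v d = 0"
        using d by (simp add: matrix_vector_mult_add_rdistrib flip: scaleR_matrix_vector_assoc)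
      with inv d show False by (simp add: inv_iff_ker)
    qed
  qed
next
  assume pd: "\<forall>d. d \<noteq> 0 \<and> (mat 1 - M) *v d = 0 \<longrightarrow> d \<bullet> (H *v d) > 0"
  show "invertible (H + (1/t) *\<^sub>R (mat 1 - M))"
    unfolding inv_iff_ker
  proof (intro allI impI)
    fix d :: "real^'n"
    assume "(H + (1/t) *\<^sub>R (mat 1 - M)) *v d = 0"
    hence e: "H *v d + (1/t) *\<^sub>R (d - M *v d) = 0"
      by (simp add: matrix_vector_mult_add_rdistrib matrix_vector_mult_diff_rdistrib flip: scaleR_matrix_vector_assoc)
    hence "d \<bullet> (H *v d + (1/t) *\<^sub>R (d - M *v d)) = 0" by simp
    hence e2: "d \<bullet> (H *v d) + (1/t) * (d \<bullet> d - d \<bullet> (M *v d)) = 0"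
      by (simp add: inner_add_right inner_diff_right)
    have cs: "d \<bullet> (M *v d) \<le> norm d * norm d"
    proof -
      have "d \<bullet> (M *v d) \<le> norm d * norm (M *v d)" by (rule norm_cauchy_schwarz)
      also have "\<dots> \<le> norm d * norm d" using nx[of d] by (simp add: mult_left_mono)
      finally show ?thesis .
    qed
    have dd: "d \<bullet> d = norm d * norm d" by (simp add: power2_eq_square flip: power2_norm_eq_inner)
    have "(1/t) * (d \<bullet> d - d \<bullet> (M *v d)) \<ge> 0" using t cs dd by simp
    with e2 psd[of d] have h0: "d \<bullet> (H *v d) = 0" and "(1/t) * (d \<bullet> d - d \<bullet> (M *v d)) = 0"
      by linarith+
    hence m0: "d \<bullet> (M *v d) = d \<bullet> d" using t by simp
    have "norm (d - M *v d)^2 = d \<bullet> d - 2 * (d \<bullet> (M *v d)) + (M *v d) \<bullet> (M *v d)"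
      by (simp add: power2_norm_eq_inner inner_diff_left inner_diff_right inner_commute)
    also have "\<dots> = (norm (M *v d))^2 - (norm d)^2" using m0 by (simp add: power2_norm_eq_inner)
    also have "\<dots> \<le> 0" using power_mono[OF nx[of d] norm_ge_zero, of 2] by simp
    finally have "d - M *v d = 0" by simp
    hence "(mat 1 - M) *v d = 0" by (simp add: matrix_vector_mult_diff_rdistrib)
    with pd h0 show "d = 0" by force
  qed
qed



lemma Bjac_bound:
  fixes G :: "real^'n \<Rightarrow> real^'m"
  assumes nx: "\<And>a b. norm (G a - G b) \<le> norm (a - b)" and M: "M \<in> B_jac G y"
  shows "norm (M *v d) \<le> norm d"
proof -
  obtain xs where xs: "\<And>k. G differentiable (at (xs k))" "(\<lambda>k. jac G (xs k)) \<longlonglongrightarrow> M"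
    using M unfolding B_jac_def by blast
  have "norm (jac G (xs k) *v d) \<le> norm d" for k
  proof -
    have der: "(G has_derivative frechet_derivative G (at (xs k))) (at (xs k))"
      using xs(1) frechet_derivative_works by blast
    hence "linear (frechet_derivative G (at (xs k)))" using has_derivative_linear by blast
    hence "jac G (xs k) *v d = frechet_derivative G (at (xs k)) d" by (simp add: jac_def matrix_works)
    thus ?thesis using deriv_bound[OF der nx] by simp
  qed
  moreover have "(\<lambda>k. jac G (xs k) *v d) \<longlonglongrightarrow> M *v d"
    using bounded_linear.tendsto[OF bl_mv xs(2)] .
  ultimately show ?thesis
    by (intro Lim_norm_ubound[OF trivial_limit_sequentially]) auto
qed

lemma F_deriv:
  assumes C: "C2 f" and D: "(prox t h has_derivative D) (at (y - t *\<^sub>R z))"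
  shows "(F_ALM f h t z has_derivative (\<lambda>v. hess f y *v v + (1/t) *\<^sub>R (v - D v))) (at y)"
proof -
  have "((\<lambda>y. y - t *\<^sub>R z) has_derivative (\<lambda>v. v)) (at y)" by (auto intro!: derivative_eq_intros)
  from has_derivative_compose[OF this D]
  have P: "((\<lambda>y. prox t h (y - t *\<^sub>R z)) has_derivative D) (at y)" by (simp add: o_def)
  show ?thesis unfolding F_ALM_def
    by (intro has_derivative_add L_hess[OF C] has_derivative_scaleR_right has_derivative_diff P)
       (auto intro!: derivative_eq_intros)
qed

lemma F_jac:
  assumes C: "C2 f" and dP: "prox t h differentiable (at (y - t *\<^sub>R z))"
  shows "F_ALM f h t z differentiable (at y)"
    and "jac (F_ALM f h t z) y = hess f y + (1/t) *\<^sub>R (mat 1 - jac (prox t h) (y - t *\<^sub>R z))"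
proof -
  define D where "D = frechet_derivative (prox t h) (at (y - t *\<^sub>R z))"
  have D: "(prox t h has_derivative D) (at (y - t *\<^sub>R z))"
    using dP frechet_derivative_works unfolding D_def by blast
  have lD: "linear D" using D has_derivative_linear by blast
  have F: "(F_ALM f h t z has_derivative (\<lambda>v. hess f y *v v + (1/t) *\<^sub>R (v - D v))) (at y)"
    by (rule F_deriv[OF C D])
  thus "F_ALM f h t z differentiable (at y)" unfolding differentiable_def by blast
  have lF: "linear (\<lambda>v. hess f y *v v + (1/t) *\<^sub>R (v - D v))" using F has_derivative_linear by blast
  have "frechet_derivative (F_ALM f h t z) (at y) = (\<lambda>v. hess f y *v v + (1/t) *\<^sub>R (v - D v))"
    using frechet_derivative_at[OF F] by simp
  hence "jac (F_ALM f h t z) y = matrix (\<lambda>v. hess f y *v v + (1/t) *\<^sub>R (v - D v))"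
    by (simp add: jac_def)
  also have "\<dots> = hess f y + (1/t) *\<^sub>R (mat 1 - matrix D)"
  proof -
    have mF: "matrix (\<lambda>v. hess f y *v v + (1/t) *\<^sub>R (v - D v)) *v v = hess f y *v v + (1/t) *\<^sub>R (v - D v)" for v
      using lF by (simp add: matrix_works)
    have mD: "matrix D *v v = D v" for v using lD by (simp add: matrix_works)
    show ?thesis unfolding matrix_eq
      by (simp add: mF mD matrix_vector_mult_add_rdistrib
        matrix_vector_mult_diff_rdistrib flip: scaleR_matrix_vector_assoc)
  qed
  also have "matrix D = jac (prox t h) (y - t *\<^sub>R z)" by (simp add: jac_def D_def)
  finally show "jac (F_ALM f h t z) y = hess f y + (1/t) *\<^sub>R (mat 1 - jac (prox t h) (y - t *\<^sub>R z))" .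
qed

lemma F_diff_imp:
  assumes C: "C2 f" and t: "t > 0" and dF: "F_ALM f h t z differentiable (at y)"
  shows "prox t h differentiable (at (y - t *\<^sub>R z))"
proof -
  have eq: "prox t h = (\<lambda>w. w - t *\<^sub>R (F_ALM f h t z (w + t *\<^sub>R z) - grad f (w + t *\<^sub>R z)))"
    using t by (auto simp: F_ALM_def algebra_simps intro!: ext)
  obtain F' where F': "(F_ALM f h t z has_derivative F') (at ((y - t *\<^sub>R z) + t *\<^sub>R z))"
    using dF unfolding differentiable_def by auto
  have tr: "((\<lambda>w. w + t *\<^sub>R z) has_derivative (\<lambda>v. v)) (at w)" for w
    by (auto intro!: derivative_eq_intros)
  have "((\<lambda>w. F_ALM f h t z (w + t *\<^sub>R z)) has_derivative F') (at (y - t *\<^sub>R z))"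
    using has_derivative_compose[OF tr F'] by (simp add: o_def)
  moreover have "((\<lambda>w. grad f (w + t *\<^sub>R z)) has_derivative (\<lambda>v. hess f ((y - t *\<^sub>R z) + t *\<^sub>R z) *v v)) (at (y - t *\<^sub>R z))"
    using has_derivative_compose[OF tr L_hess[OF C, of "(y - t *\<^sub>R z) + t *\<^sub>R z"]] by (simp add: o_def)
  ultimately show ?thesis unfolding eq o_def
    by (intro differentiable_diff differentiable_scaleR differentiable_ident)
       (auto simp: differentiable_def)
qed

theorem proposition3p3:
  fixes f :: "real^'n \<Rightarrow> real" and h :: "real^'n \<Rightarrow> ereal" and t :: real and z x :: "real^'n"
  assumes "C2 f" and "convex_on UNIV f"
    and "proper_fun h" and "closed_fun h" and "convex_fun h"
    and "t > 0"
  shows "BD_regular (F_ALM f h t z) x \<longleftrightarrow>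
    (\<forall>M \<in> B_jac (prox t h) (x - t *\<^sub>R z).
       \<forall>d. d \<noteq> 0 \<and> (mat 1 - M) *v d = 0 \<longrightarrow> d \<bullet> (hess f x *v d) > 0)"
proof -
  note C = assms(1) and cv = assms(2) and pr = assms(3) and cl = assms(4) and cvh = assms(5) and t = assms(6)
  let ?F = "F_ALM f h t z" and ?P = "prox t h" and ?H = "hess f x"
  have key: "invertible (?H + (1/t) *\<^sub>R (mat 1 - M)) \<longleftrightarrow>
     (\<forall>d. d \<noteq> 0 \<and> (mat 1 - M) *v d = 0 \<longrightarrow> d \<bullet> (?H *v d) > 0)"
    if "M \<in> B_jac ?P (x - t *\<^sub>R z)" for M
    by (rule lin_key[OF t L_psd[OF C cv] L_ker[OF C cv] Bjac_bound[OF prox_nonexp[OF pr cl cvh t] that]])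
  have hc: "isCont (hess f) x" by (rule L_hess_cont[OF C])
  have fwd: "?H + (1/t) *\<^sub>R (mat 1 - M) \<in> B_jac ?F x" if M: "M \<in> B_jac ?P (x - t *\<^sub>R z)" for M
  proof -
    obtain xs where xs: "\<And>k. ?P differentiable (at (xs k))" "xs \<longlonglongrightarrow> x - t *\<^sub>R z"
      "(\<lambda>k. jac ?P (xs k)) \<longlonglongrightarrow> M"
      using M unfolding B_jac_def by blast
    define ys where "ys k = xs k + t *\<^sub>R z" for k
    have d: "?P differentiable (at (ys k - t *\<^sub>R z))" for k using xs(1) by (simp add: ys_def)
    have "ys \<longlonglongrightarrow> (x - t *\<^sub>R z) + t *\<^sub>R z" unfolding ys_def by (intro tendsto_intros xs(2))
    hence ys: "ys \<longlonglongrightarrow> x" by simp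
    have "(\<lambda>k. hess f (ys k) + (1/t) *\<^sub>R (mat 1 - jac ?P (xs k))) \<longlonglongrightarrow> ?H + (1/t) *\<^sub>R (mat 1 - M)"
      by (intro tendsto_intros isCont_tendsto_compose[OF hc ys] xs(3))
    moreover have "jac ?F (ys k) = hess f (ys k) + (1/t) *\<^sub>R (mat 1 - jac ?P (xs k))" for k
      using F_jac(2)[OF C d[of k]] by (simp add: ys_def)
    ultimately show ?thesis unfolding B_jac_def
      by (intro CollectI exI[of _ ys]) (use F_jac(1)[OF C d] ys in simp)
  qed
  have bwd: "\<exists>M \<in> B_jac ?P (x - t *\<^sub>R z). M' = ?H + (1/t) *\<^sub>R (mat 1 - M)" if M': "M' \<in> B_jac ?F x" for M'
  proof -
    obtain xs where xs: "\<And>k. ?F differentiable (at (xs k))" "xs \<longlonglongrightarrow> x"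
      "(\<lambda>k. jac ?F (xs k)) \<longlonglongrightarrow> M'"
      using M' unfolding B_jac_def by blast
    define ys where "ys k = xs k - t *\<^sub>R z" for k
    have d: "?P differentiable (at (ys k))" for k using F_diff_imp[OF C t xs(1)] by (simp add: ys_def)
    have ys: "ys \<longlonglongrightarrow> x - t *\<^sub>R z" unfolding ys_def by (intro tendsto_intros xs(2))
    have "jac ?P (ys k) = mat 1 - t *\<^sub>R (jac ?F (xs k) - hess f (xs k))" for k
    proof -
      have "jac ?F (xs k) = hess f (xs k) + (1/t) *\<^sub>R (mat 1 - jac ?P (ys k))"
        using F_jac(2)[OF C d[of k, unfolded ys_def]] by (simp add: ys_def)
      hence "t *\<^sub>R (jac ?F (xs k) - hess f (xs k)) = t *\<^sub>R ((1/t) *\<^sub>R (mat 1 - jac ?P (ys k)))" by simp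
      also have "\<dots> = mat 1 - jac ?P (ys k)" using t by simp
      finally show ?thesis by simp
    qed
    moreover have "(\<lambda>k. mat 1 - t *\<^sub>R (jac ?F (xs k) - hess f (xs k))) \<longlonglongrightarrow> mat 1 - t *\<^sub>R (M' - ?H)"
      by (intro tendsto_intros isCont_tendsto_compose[OF hc xs(2)] xs(3))
    ultimately have "mat 1 - t *\<^sub>R (M' - ?H) \<in> B_jac ?P (x - t *\<^sub>R z)"
      unfolding B_jac_def by (intro CollectI exI[of _ ys]) (use d ys in simp)
    moreover have "M' = ?H + (1/t) *\<^sub>R (mat 1 - (mat 1 - t *\<^sub>R (M' - ?H)))"
      using t by simp
    ultimately show ?thesis by blast
  qed
  show ?thesis
  proof
    assume bd: "BD_regular ?F x"
    show "\<forall>M \<in> B_jac ?P (x - t *\<^sub>R z). \<forall>d. d \<noteq> 0 \<and> (mat 1 - M) *v d = 0 \<longrightarrow> d \<bullet> (?H *v d) > 0"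
      using bd fwd key unfolding BD_regular_def by blast
  next
    assume R: "\<forall>M \<in> B_jac ?P (x - t *\<^sub>R z). \<forall>d. d \<noteq> 0 \<and> (mat 1 - M) *v d = 0 \<longrightarrow> d \<bullet> (?H *v d) > 0"
    show "BD_regular ?F x" unfolding BD_regular_def
    proof
      fix M' assume "M' \<in> B_jac ?F x"
      then obtain M where M: "M \<in> B_jac ?P (x - t *\<^sub>R z)" "M' = ?H + (1/t) *\<^sub>R (mat 1 - M)"
        using bwd by blast
      show "invertible M'" using key[OF M(1)] R M by blast
    qed
  qed
qed

end
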